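(* Let $J\ge 1$ and $K_1,\dots,K_J\ge 1$. For $j=1,\dots,J$ let $\mathbf{z}_j$ be a continuous latent variable and $c_j\in\{1,\dots,K_j\}$ a discrete variable. Write $\vec{\mathbf{z}}=(\mathbf{z}_1,\dots,\mathbf{z}_J)$ and $\mathbf{c}=(c_1,\dots,c_J)\in\mathcal{C}:=\prod_{j=1}^J\{1,\dots,K_j\}$. Suppose the prior factorises as $p_\theta(\vec{\mathbf{z}},\mathbf{c})=\prod_{j=1}^J p_\theta(\mathbf{z}_j,c_j)$, with $p_\theta(\mathbf{z}_j,c_j)=p_\theta(\mathbf{z}_j\mid c_j)p_\theta(c_j)$, and let $p_\theta(\mathbf{c}\mid\vec{\mathbf{z}})$ and $p_\theta(c_j\mid\mathbf{z}_j)$ be the corresponding posteriors. Fix an input $\mathbf{x}$ and let $q_\phi(\vec{\mathbf{z}}\mid\mathbf{x})=\prod_{j=1}^J q_\phi(\mathbf{z}_j\mid\mathbf{x})$ be any factorised probability distribution over $\vec{\mathbf{z}}$. For each $j$ define $$Z_j(q_\phi(\mathbf{z}_j\mid\mathbf{x})):=\sum_{c_j=1}^{K_j}\exp\left(\mathbb{E}_{q_\phi(\mathbf{z}_j\mid\mathbf{x})}\log p_\theta(c_j\mid\mathbf{z}_j)\right),\qquad \pi_j(c_j\mid q_\phi(\mathbf{z}_j\mid\mathbf{x})):=\frac{\exp\left(\mathbb{E}_{q_\phi(\mathbf{z}_j\mid\mathbf{x})}\log p_\theta(c_j\mid\mathbf{z}_j)\right)}{Z_j(q_\phi(\mathbf{z}_j\mid\mathbf{x}))}$$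 for $c_j=1,\dots,K_j$. Then, over all probability distributions $q_\phi(\mathbf{c}\mid\mathbf{x})$ on $\mathcal{C}$, the quantity $\mathbb{E}_{q_\phi(\vec{\mathbf{z}}\mid\mathbf{x})}\mathrm{KL}\left[q_\phi(\mathbf{c}\mid\mathbf{x})\,\|\,p_\theta(\mathbf{c}\mid\vec{\mathbf{z}})\right]$ is minimised by $q_\phi(\mathbf{c}\mid\mathbf{x})=\prod_{j=1}^J\pi_j(c_j\mid q_\phi(\mathbf{z}_j\mid\mathbf{x}))$, and its minimum value is $-\sum_{j=1}^J\log Z_j(q_\phi(\mathbf{z}_j\mid\mathbf{x}))$.
   Context: $\mathrm{KL}[q\|p]=\sum_{\mathbf{c}} q(\mathbf{c})\log\frac{q(\mathbf{c})}{p(\mathbf{c})}$ is the Kullback–Leibler divergence between distributions on the finite set $\mathcal{C}$. The expectations $\mathbb{E}_{q_\phi(\mathbf{z}_j\mid\mathbf{x})}\log p_\theta(c_j\mid\mathbf{z}_j)$ are assumed to be well defined and finite for all $j$ and $c_j$. *)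

theory Defs
  imports "HOL-Probability.Probability"
begin

text \<open>Index set of the J factors: j ranges over {0..<J}; the discrete variable c_j
  ranges over {1..K j}. Configurations c are elements of the finite set
  C = Pi_E {0..<J} (\<lambda>j. {1..K j}).\<close>

definition config_set :: "nat \<Rightarrow> (nat \<Rightarrow> nat) \<Rightarrow> (nat \<Rightarrow> nat) set" where
  "config_set J K = PiE {0..<J} (\<lambda>j. {1..K j})"

text \<open>KL divergence between two distributions on a finite set C
  (convention 0 * log(0/p) = 0 is automatic since 0 * x = 0).\<close>
definition KL_fin :: "'c set \<Rightarrow> ('c \<Rightarrow> real) \<Rightarrow> ('c \<Rightarrow> real) \<Rightarrow> real" where
  "KL_fin C q p = (\<Sum>c\<in>C. q c * ln (q c / p c))"

definition is_distr :: "'c set \<Rightarrow> ('c \<Rightarrow> real) \<Rightarrow> bool" where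
  "is_distr C q \<longleftrightarrow> (\<forall>c\<in>C. 0 \<le> q c) \<and> (\<Sum>c\<in>C. q c) = 1"

text \<open>Per-factor posterior p(c_j | z_j) by Bayes, from the conditional density
  lik j c z = p(z_j = z | c_j = c) and the prior pc j c = p(c_j = c).\<close>
definition post_j :: "(nat \<Rightarrow> nat) \<Rightarrow> (nat \<Rightarrow> nat \<Rightarrow> 'a \<Rightarrow> real) \<Rightarrow> (nat \<Rightarrow> nat \<Rightarrow> real)
    \<Rightarrow> nat \<Rightarrow> nat \<Rightarrow> 'a \<Rightarrow> real" where
  "post_j K lik pc j c z = lik j c z * pc j c / (\<Sum>c'\<in>{1..K j}. lik j c' z * pc j c')"

definition post_joint :: "nat \<Rightarrow> (nat \<Rightarrow> nat) \<Rightarrow> (nat \<Rightarrow> nat \<Rightarrow> 'a \<Rightarrow> real) \<Rightarrow> (nat \<Rightarrow> nat \<Rightarrow> real)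
    \<Rightarrow> (nat \<Rightarrow> 'a) \<Rightarrow> (nat \<Rightarrow> nat) \<Rightarrow> real" where
  "post_joint J K lik pc zv c =
     (\<Prod>j<J. lik j (c j) (zv j) * pc j (c j)) /
     (\<Sum>c'\<in>config_set J K. \<Prod>j<J. lik j (c' j) (zv j) * pc j (c' j))"

definition Zj :: "(nat \<Rightarrow> nat) \<Rightarrow> (nat \<Rightarrow> nat \<Rightarrow> 'a \<Rightarrow> real) \<Rightarrow> (nat \<Rightarrow> nat \<Rightarrow> real)
    \<Rightarrow> (nat \<Rightarrow> 'a measure) \<Rightarrow> nat \<Rightarrow> real" where
  "Zj K lik pc q j = (\<Sum>c\<in>{1..K j}. exp (\<integral>z. ln (post_j K lik pc j c z) \<partial>(q j)))"

definition pij :: "(nat \<Rightarrow> nat) \<Rightarrow> (nat \<Rightarrow> nat \<Rightarrow> 'a \<Rightarrow> real) \<Rightarrow> (nat \<Rightarrow> nat \<Rightarrow> real)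
    \<Rightarrow> (nat \<Rightarrow> 'a measure) \<Rightarrow> nat \<Rightarrow> nat \<Rightarrow> real" where
  "pij K lik pc q j c = exp (\<integral>z. ln (post_j K lik pc j c z) \<partial>(q j)) / Zj K lik pc q j"

definition objective :: "nat \<Rightarrow> (nat \<Rightarrow> nat) \<Rightarrow> (nat \<Rightarrow> nat \<Rightarrow> 'a \<Rightarrow> real) \<Rightarrow> (nat \<Rightarrow> nat \<Rightarrow> real)
    \<Rightarrow> (nat \<Rightarrow> 'a measure) \<Rightarrow> ((nat \<Rightarrow> nat) \<Rightarrow> real) \<Rightarrow> real" where
  "objective J K lik pc q Q =
     (\<integral>zv. KL_fin (config_set J K) Q (post_joint J K lik pc zv) \<partial>(PiM {0..<J} q))"

end

theory Submission imports Defs begin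

lemma comp_int:
  fixes f :: "'a \<Rightarrow> real"
  assumes P: "\<And>i. i\<in>I \<Longrightarrow> prob_space (M i)" and i: "i\<in>I" and f: "integrable (M i) f"
  shows "integrable (PiM I M) (\<lambda>x. f (x i))" "integral\<^sup>L (PiM I M) (\<lambda>x. f (x i)) = integral\<^sup>L (M i) f"
proof -
  have fm: "f \<in> borel_measurable (M i)" using f by auto
  have g: "(\<lambda>x. x i) \<in> measurable (PiM I M) (M i)" using i by (rule measurable_component_singleton)
  have d: "distr (PiM I M) (M i) (\<lambda>x. x i) = M i" using distr_PiM_component[OF P i] .
  show "integrable (PiM I M) (\<lambda>x. f (x i))"
    using integrable_distr_eq[OF g fm] f d by simp
  show "integral\<^sup>L (PiM I M) (\<lambda>x. f (x i)) = integral\<^sup>L (M i) f"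
    using integral_distr[OF g fm] d by simp
qed

lemma post_meas:
  assumes "\<And>c. c \<in> {1..K j} \<Longrightarrow> lik j c \<in> borel_measurable M" "c \<in> {1..K j}"
  shows "post_j K lik pc j c \<in> borel_measurable M"
  unfolding post_j_def using assms
  by (intro borel_measurable_divide borel_measurable_times borel_measurable_sum borel_measurable_const) auto

lemma prob_PiE:
  fixes g :: "nat \<Rightarrow> nat \<Rightarrow> real"
  shows "(\<Sum>c\<in>config_set J K. \<Prod>j<J. g j (c j)) = (\<Prod>j<J. \<Sum>x\<in>{1..K j}. g j x)"
  unfolding config_set_def atLeast0LessThan
  using prod_sum_PiE[of "{..<J}" "\<lambda>j. {1..K j}" g] by simp

lemma post_joint_eq:
  assumes "c \<in> config_set J K"
  shows "post_joint J K lik pc zv c = (\<Prod>j<J. post_j K lik pc j (c j) (zv j))"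
  unfolding post_joint_def post_j_def prod_dividef
  using prob_PiE[of "\<lambda>j x. lik j x (zv j) * pc j x"] by simp

theorem theorem2:
  fixes J :: nat and K :: "nat \<Rightarrow> nat"
    and lik :: "nat \<Rightarrow> nat \<Rightarrow> 'a \<Rightarrow> real"
    and pc :: "nat \<Rightarrow> nat \<Rightarrow> real"
    and q :: "nat \<Rightarrow> 'a measure"
  assumes J: "J \<ge> 1"
    and K: "\<And>j. j < J \<Longrightarrow> K j \<ge> 1"
    and prior: "\<And>j. j < J \<Longrightarrow> is_distr {1..K j} (pc j)"
    and lik_meas: "\<And>j c. j < J \<Longrightarrow> c \<in> {1..K j} \<Longrightarrow> lik j c \<in> borel_measurable (q j)"
    and lik_nonneg: "\<And>j c z. j < J \<Longrightarrow> c \<in> {1..K j} \<Longrightarrow> z \<in> space (q j) \<Longrightarrow> 0 \<le> lik j c z"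
    and q_prob: "\<And>j. j < J \<Longrightarrow> prob_space (q j)"
    and post_pos: "\<And>j c. j < J \<Longrightarrow> c \<in> {1..K j} \<Longrightarrow>
                     AE z in q j. 0 < post_j K lik pc j c z"
    and finite_exp: "\<And>j c. j < J \<Longrightarrow> c \<in> {1..K j} \<Longrightarrow>
                     integrable (q j) (\<lambda>z. ln (post_j K lik pc j c z))"
  shows "is_distr (config_set J K) (\<lambda>c. \<Prod>j<J. pij K lik pc q j (c j))
    \<and> (\<forall>Q. is_distr (config_set J K) Q \<longrightarrow>
          objective J K lik pc q (\<lambda>c. \<Prod>j<J. pij K lik pc q j (c j))
            \<le> objective J K lik pc q Q)
    \<and> objective J K lik pc q (\<lambda>c. \<Prod>j<J. pij K lik pc q j (c j))
        = - (\<Sum>j<J. ln (Zj K lik pc q j))"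
proof -
  define C where "C = config_set J K"
  define L where "L j c = (\<integral>z. ln (post_j K lik pc j c z) \<partial>(q j))" for j c
  define Z where "Z j = Zj K lik pc q j" for j
  define P where "P c = (\<Prod>j<J. pij K lik pc q j (c j))" for c :: "nat \<Rightarrow> nat"
  define S where "S = (\<Sum>j<J. ln (Z j))"
  define M where "M = PiM {0..<J} q"
  have finC: "finite C" unfolding C_def config_set_def by (auto intro: finite_PiE)
  have memC: "c j \<in> {1..K j}" if "c \<in> C" "j < J" for c j
    using that unfolding C_def config_set_def by (auto simp: PiE_iff)
  have Zeq: "Z j = (\<Sum>c\<in>{1..K j}. exp (L j c))" for j
    unfolding Z_def Zj_def L_def ..
  have Zpos: "0 < Z j" if "j < J" for j
    unfolding Zeq using K[OF that] by (intro sum_pos) auto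
  have pij_eq: "pij K lik pc q j c = exp (L j c) / Z j" for j c
    unfolding pij_def L_def Z_def ..
  have P_pos: "0 < P c" if "c \<in> C" for c
    unfolding P_def pij_eq using Zpos by (intro prod_pos) auto
  have P_sum: "(\<Sum>c\<in>C. P c) = 1"
  proof -
    have "(\<Sum>c\<in>C. P c) = (\<Prod>j<J. \<Sum>x\<in>{1..K j}. pij K lik pc q j x)"
      unfolding C_def P_def by (rule prob_PiE)
    also have "\<dots> = (\<Prod>j<J. 1)"
    proof (rule prod.cong[OF refl])
      fix j assume "j \<in> {..<J}"
      then have "Z j > 0" using Zpos by auto
      then show "(\<Sum>x\<in>{1..K j}. pij K lik pc q j x) = 1"
        unfolding pij_eq sum_divide_distrib[symmetric] Zeq by simp
    qed
    finally show ?thesis by simp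
  qed
  have lnP: "ln (P c) = (\<Sum>j<J. L j (c j)) - S" if "c \<in> C" for c
  proof -
    have "ln (P c) = (\<Sum>j<J. ln (exp (L j (c j)) / Z j))"
      unfolding P_def pij_eq by (intro ln_prod) (auto dest: Zpos)
    also have "\<dots> = (\<Sum>j<J. L j (c j) - ln (Z j))"
      by (intro sum.cong refl) (auto simp: ln_div dest: Zpos)
    finally show ?thesis unfolding S_def by (simp add: sum_subtractf)
  qed
  have probM: "prob_space M" unfolding M_def using q_prob by (intro prob_space_PiM) auto
  then interpret pM: prob_space M .
  have post_m: "(\<lambda>zv. post_j K lik pc j c (zv j)) \<in> borel_measurable M" if "j < J" "c \<in> {1..K j}" for j c
    unfolding M_def
    by (rule measurable_compose[OF measurable_component_singleton post_meas]) (use that lik_meas in auto)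
  have ints: "integrable M (\<lambda>zv. ln (post_j K lik pc j c (zv j)))"
    "integral\<^sup>L M (\<lambda>zv. ln (post_j K lik pc j c (zv j))) = L j c"
    if "j < J" "c \<in> {1..K j}" for j c
    using comp_int[of "{0..<J}" q j "\<lambda>z. ln (post_j K lik pc j c z)"] that q_prob finite_exp
    unfolding M_def L_def by auto
  have obj: "objective J K lik pc q Q = (\<Sum>c\<in>C. Q c * ln (Q c)) - (\<Sum>c\<in>C. Q c * (\<Sum>j<J. L j (c j)))"
    if Qnn: "\<forall>c\<in>C. 0 \<le> Q c" for Q
  proof -
    define F where "F zv = (\<Sum>c\<in>C. Q c * ln (Q c / (\<Prod>j<J. post_j K lik pc j (c j) (zv j))))" for zv
    define G where "G zv = (\<Sum>c\<in>C. Q c * ln (Q c) - Q c * (\<Sum>j<J. ln (post_j K lik pc j (c j) (zv j))))" for zv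
    have "objective J K lik pc q Q = integral\<^sup>L M F"
      unfolding objective_def M_def[symmetric] KL_fin_def F_def C_def[symmetric]
      by (intro Bochner_Integration.integral_cong refl sum.cong) (simp add: post_joint_eq C_def)
    also have "\<dots> = integral\<^sup>L M G"
    proof (rule integral_cong_AE)
      show "F \<in> borel_measurable M" unfolding F_def
        by (intro borel_measurable_sum borel_measurable_times borel_measurable_const borel_measurable_ln
            borel_measurable_divide borel_measurable_prod post_m memC) auto
      show intG: "G \<in> borel_measurable M" unfolding G_def
        by (intro borel_measurable_sum borel_measurable_diff borel_measurable_times borel_measurable_const borel_measurable_ln
            borel_measurable_prod post_m memC) auto
      have "AE zv in M. \<forall>j\<in>{..<J}. \<forall>c\<in>{1..K j}. 0 < post_j K lik pc j c (zv j)"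
        unfolding M_def
        by (intro eventually_ball_finite ballI AE_PiM_component[of "{0..<J}"] q_prob post_pos) auto
      then show "AE zv in M. F zv = G zv"
      proof (rule eventually_mono)
        fix zv assume pos: "\<forall>j\<in>{..<J}. \<forall>c\<in>{1..K j}. 0 < post_j K lik pc j c (zv j)"
        show "F zv = G zv" unfolding F_def G_def
        proof (rule sum.cong[OF refl])
          fix c assume c: "c \<in> C"
          have pp: "0 < post_j K lik pc j (c j) (zv j)" if "j \<in> {..<J}" for j
            using pos memC[OF c] that by auto
          have lp: "ln (\<Prod>j<J. post_j K lik pc j (c j) (zv j)) = (\<Sum>j<J. ln (post_j K lik pc j (c j) (zv j)))"
            using pp by (intro ln_prod) (auto simp: less_imp_neq[symmetric])
          have pr: "0 < (\<Prod>j<J. post_j K lik pc j (c j) (zv j))" using pp by (intro prod_pos) auto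
          show "Q c * ln (Q c / (\<Prod>j<J. post_j K lik pc j (c j) (zv j))) =
                Q c * ln (Q c) - Q c * (\<Sum>j<J. ln (post_j K lik pc j (c j) (zv j)))"
          proof (cases "Q c = 0")
            case False
            then have "Q c > 0" using Qnn c by force
            then have "ln (Q c / (\<Prod>j<J. post_j K lik pc j (c j) (zv j))) = ln (Q c) - ln (\<Prod>j<J. post_j K lik pc j (c j) (zv j))"
              using pr by (intro ln_divide_pos)
            then show ?thesis by (simp only: lp right_diff_distrib)
          qed simp
        qed
      qed
    qed
    also have "\<dots> = (\<Sum>c\<in>C. Q c * ln (Q c) - Q c * (\<Sum>j<J. L j (c j)))"
    proof -
      have intc: "integrable M (\<lambda>zv. \<Sum>j<J. ln (post_j K lik pc j (c j) (zv j)))"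
        "integral\<^sup>L M (\<lambda>zv. \<Sum>j<J. ln (post_j K lik pc j (c j) (zv j))) = (\<Sum>j<J. L j (c j))"
        if c: "c \<in> C" for c
      proof -
        show "integrable M (\<lambda>zv. \<Sum>j<J. ln (post_j K lik pc j (c j) (zv j)))"
          using ints(1) memC[OF c] by (intro Bochner_Integration.integrable_sum) auto
        show "integral\<^sup>L M (\<lambda>zv. \<Sum>j<J. ln (post_j K lik pc j (c j) (zv j))) = (\<Sum>j<J. L j (c j))"
          using ints memC[OF c] by (subst Bochner_Integration.integral_sum) (auto intro!: sum.cong)
      qed
      have intc2: "integrable M (\<lambda>zv. Q c * ln (Q c) - Q c * (\<Sum>j<J. ln (post_j K lik pc j (c j) (zv j))))"
        if c: "c \<in> C" for c
        using intc(1)[OF c] by (intro Bochner_Integration.integrable_diff integrable_mult_right pM.integrable_const)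
      show ?thesis unfolding G_def
        apply (subst Bochner_Integration.integral_sum)
        using intc2 apply simp
        apply (intro sum.cong refl)
        apply (subst Bochner_Integration.integral_diff)
        using intc2 intc pM.prob_space apply (auto intro!: integrable_mult_right)
        done
    qed
    finally show ?thesis by (simp add: sum_subtractf)
  qed
  have P_distr: "is_distr C P" unfolding is_distr_def using P_pos P_sum by (auto intro: less_imp_le)
  have objP: "objective J K lik pc q P = - S"
  proof -
    have "objective J K lik pc q P = (\<Sum>c\<in>C. P c * ln (P c)) - (\<Sum>c\<in>C. P c * (ln (P c) + S))"
    proof -
      have "objective J K lik pc q P = (\<Sum>c\<in>C. P c * ln (P c)) - (\<Sum>c\<in>C. P c * (\<Sum>j<J. L j (c j)))"
        by (rule obj) (use P_pos in \<open>auto intro: less_imp_le\<close>)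
      then show ?thesis using lnP by (simp cong: sum.cong)
    qed
    also have "\<dots> = - S * (\<Sum>c\<in>C. P c)"
      by (simp add: sum_negf distrib_left sum.distrib sum_distrib_right sum_distrib_left mult.commute)
    finally show ?thesis using P_sum by simp
  qed
  have opt: "objective J K lik pc q P \<le> objective J K lik pc q Q" if Q: "is_distr C Q" for Q
  proof -
    have Qnn: "\<forall>c\<in>C. 0 \<le> Q c" and Qs: "(\<Sum>c\<in>C. Q c) = 1" using Q unfolding is_distr_def by auto
    have "objective J K lik pc q Q = (\<Sum>c\<in>C. Q c * ln (Q c)) - (\<Sum>c\<in>C. Q c * (ln (P c) + S))"
      using obj[OF Qnn] lnP by (simp cong: sum.cong)
    also have "\<dots> = (\<Sum>c\<in>C. Q c * ln (Q c) - Q c * ln (P c)) - S * (\<Sum>c\<in>C. Q c)"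
      by (simp add: distrib_left sum.distrib sum_distrib_right sum_distrib_left sum_subtractf mult.commute)
    also have "\<dots> \<ge> (\<Sum>c\<in>C. Q c - P c) - S"
    proof -
      have "(\<Sum>c\<in>C. Q c - P c) \<le> (\<Sum>c\<in>C. Q c * ln (Q c) - Q c * ln (P c))"
      proof (rule sum_mono)
        fix c assume c: "c \<in> C"
        show "Q c - P c \<le> Q c * ln (Q c) - Q c * ln (P c)"
        proof (cases "Q c = 0")
          case True then show ?thesis using P_pos[OF c] by simp
        next
          case False
          then have qp: "Q c > 0" using Qnn c by force
          have "ln (P c / Q c) \<le> P c / Q c - 1" using qp P_pos[OF c] by (intro ln_le_minus_one) simp
          then have "Q c * ln (P c / Q c) \<le> Q c * (P c / Q c - 1)" using qp by (intro mult_left_mono) auto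
          then show ?thesis using qp P_pos[OF c] by (simp add: ln_div right_diff_distrib)
        qed
      qed
      then show ?thesis using Qs by simp
    qed
    finally show ?thesis using objP Qs P_sum by (simp add: sum_subtractf)
  qed
  show ?thesis
    using P_distr opt objP unfolding C_def P_def S_def Z_def by auto
qed

end
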